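(* Let $L$ be a cosimplicial group. The map sending a morphism of cosimplicial groups $h\colon F\to L$ to $h^1(a_1)\in L_1$ is a bijection from the set of cosimplicial morphisms $F\to L$ onto $Z^1(L)$. The morphism $h_b$ corresponding to $b\in Z^1(L)$ is given by $h_b^n(a_j)=(d^0)^{j-1}(d^2)^{n-j}(b)$ for $1\le j\le n$.
   Context: $F$ is the cosimplicial group with $F_n$ the free group on $a_1,\dots,a_n$ ($F_0$ trivial), cofaces $d^i\colon F_{n-1}\to F_n$: $d^0(a_j)=a_{j+1}$; for $1\le i\le n-1$, $d^i(a_j)=a_j$ ($j<i$), $d^i(a_i)=a_ia_{i+1}$, $d^i(a_j)=a_{j+1}$ ($j>i$); $d^n(a_j)=a_j$; codegeneracies $s^i\colon F_{n+1}\to F_n$: $s^i(a_j)=a_j$ ($j\le i$), $s^i(a_{i+1})=e$, $s^i(a_j)=a_{j-1}$ ($j>i+1$). For a cosimplicial group $L$ (functor $\Delta\to\mathbf{Grp}$, $L_n=L([n])$, cofaces $d^i$, codegeneracies $s^i$), $Z^1(L)=\{b\in L_1: d^2(b)d^0(b)=d^1(b)\}$. A morphism of cosimplicial groups $h\colon F\to L$ is a natural transformation, with components $h^n\colon F_n\to L_n$. *)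

theory Defs
  imports "HOL-Algebra.Group"
begin

text \<open>Convention: a cosimplicial group is given by groups G n (= L_n), cofaces
  d n i : G n \<rightarrow> G (Suc n) for i \<le> Suc n (the paper's d^i : L_n \<rightarrow> L_(n+1)),
  and codegeneracies s n i : G (Suc n) \<rightarrow> G n for i \<le> n (the paper's s^i),
  all group homomorphisms, satisfying the cosimplicial identities.\<close>

definition cosimplicial_group ::
  "(nat \<Rightarrow> ('a, 'b) monoid_scheme) \<Rightarrow> (nat \<Rightarrow> nat \<Rightarrow> 'a \<Rightarrow> 'a) \<Rightarrow> (nat \<Rightarrow> nat \<Rightarrow> 'a \<Rightarrow> 'a) \<Rightarrow> bool"
where
  "cosimplicial_group G d s \<longleftrightarrow>
     (\<forall>n. group (G n)) \<and>
     (\<forall>n i. i \<le> Suc n \<longrightarrow> d n i \<in> hom (G n) (G (Suc n))) \<and>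
     (\<forall>n i. i \<le> n \<longrightarrow> s n i \<in> hom (G (Suc n)) (G n)) \<and>
     \<comment> \<open>d^j d^i = d^i d^(j-1), i < j\<close>
     (\<forall>n i j x. i < j \<and> j \<le> Suc (Suc n) \<and> x \<in> carrier (G n) \<longrightarrow>
        d (Suc n) j (d n i x) = d (Suc n) i (d n (j - 1) x)) \<and>
     \<comment> \<open>s^j d^i = d^i s^(j-1), i < j\<close>
     (\<forall>n i j x. i < j \<and> j \<le> Suc n \<and> x \<in> carrier (G (Suc n)) \<longrightarrow>
        s (Suc n) j (d (Suc n) i x) = d n i (s n (j - 1) x)) \<and>
     \<comment> \<open>s^j d^j = id = s^j d^(j+1)\<close>
     (\<forall>n j x. j \<le> n \<and> x \<in> carrier (G n) \<longrightarrow>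
        s n j (d n j x) = x \<and> s n j (d n (Suc j) x) = x) \<and>
     \<comment> \<open>s^j d^i = d^(i-1) s^j, i > j+1\<close>
     (\<forall>n i j x. Suc j < i \<and> i \<le> Suc (Suc n) \<and> x \<in> carrier (G (Suc n)) \<longrightarrow>
        s (Suc n) j (d (Suc n) i x) = d n (i - 1) (s n j x)) \<and>
     \<comment> \<open>s^j s^i = s^i s^(j+1), i \<le> j\<close>
     (\<forall>n i j x. i \<le> j \<and> j \<le> n \<and> x \<in> carrier (G (Suc (Suc n))) \<longrightarrow>
        s n j (s (Suc n) i x) = s n i (s (Suc n) (Suc j) x))"

definition Z1 :: "(nat \<Rightarrow> ('a, 'b) monoid_scheme) \<Rightarrow> (nat \<Rightarrow> nat \<Rightarrow> 'a \<Rightarrow> 'a) \<Rightarrow> 'a set" where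
  "Z1 G d = {b \<in> carrier (G 1). d 1 2 b \<otimes>\<^bsub>G 2\<^esub> d 1 0 b = d 1 1 b}"

fun dpow :: "(nat \<Rightarrow> nat \<Rightarrow> 'a \<Rightarrow> 'a) \<Rightarrow> nat \<Rightarrow> nat \<Rightarrow> nat \<Rightarrow> 'a \<Rightarrow> 'a" where
  "dpow d i 0 m x = x"
| "dpow d i (Suc k) m x = d (m + k) i (dpow d i k m x)"

type_synonym word = "(nat \<times> bool) list"
  \<comment> \<open>(j, True) is the letter a_j, (j, False) is a_j^(-1)\<close>

fun red :: "word \<Rightarrow> word" where
  "red [] = []"
| "red (x # xs) = (case red xs of
      [] \<Rightarrow> [x]
    | y # ys \<Rightarrow> (if fst y = fst x \<and> snd y \<noteq> snd x then ys else x # y # ys))"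

definition reduced :: "word \<Rightarrow> bool" where
  "reduced w \<longleftrightarrow> (\<forall>k. Suc k < length w \<longrightarrow>
      \<not> (fst (w ! k) = fst (w ! Suc k) \<and> snd (w ! k) \<noteq> snd (w ! Suc k)))"

definition Fgrp :: "nat \<Rightarrow> word monoid" where
  "Fgrp n = \<lparr> carrier = {w. reduced w \<and> (\<forall>x \<in> set w. 1 \<le> fst x \<and> fst x \<le> n)},
              mult = (\<lambda>u v. red (u @ v)), one = [] \<rparr>"

definition gen :: "nat \<Rightarrow> word" where
  "gen j = [(j, True)]"

definition inv_word :: "word \<Rightarrow> word" where
  "inv_word w = rev (map (\<lambda>(j, b). (j, \<not> b)) w)"

definition subst :: "(nat \<Rightarrow> word) \<Rightarrow> word \<Rightarrow> word" where
  "subst \<sigma> w = red (concat (map (\<lambda>(j, b). if b then \<sigma> j else inv_word (\<sigma> j)) w))"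

text \<open>Cofaces of F: Fd n i : F_n \<rightarrow> F_(Suc n), i \<le> Suc n (paper's d^i with target index m = Suc n).\<close>
definition Fd :: "nat \<Rightarrow> nat \<Rightarrow> word \<Rightarrow> word" where
  "Fd n i = subst (\<lambda>j.
      if i = 0 then gen (Suc j)
      else if i = Suc n then gen j
      else if j < i then gen j
      else if j = i then [(i, True), (Suc i, True)]
      else gen (Suc j))"

definition Fs :: "nat \<Rightarrow> nat \<Rightarrow> word \<Rightarrow> word" where
  "Fs n i = subst (\<lambda>j.
      if j \<le> i then gen j
      else if j = Suc i then []
      else gen (j - 1))"

text \<open>To make the set of morphisms a genuine set of natural
  transformations, each component is taken extensional (undefined off the carrier).\<close>
definition cosimp_morphs ::
  "(nat \<Rightarrow> ('a, 'b) monoid_scheme) \<Rightarrow> (nat \<Rightarrow> nat \<Rightarrow> 'a \<Rightarrow> 'a) \<Rightarrow> (nat \<Rightarrow> nat \<Rightarrow> 'a \<Rightarrow> 'a)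
     \<Rightarrow> (nat \<Rightarrow> word \<Rightarrow> 'a) set"
where
  "cosimp_morphs G d s = {h.
     (\<forall>n. h n \<in> hom (Fgrp n) (G n)) \<and>
     (\<forall>n w. w \<notin> carrier (Fgrp n) \<longrightarrow> h n w = undefined) \<and>
     (\<forall>n i w. i \<le> Suc n \<and> w \<in> carrier (Fgrp n) \<longrightarrow> h (Suc n) (Fd n i w) = d n i (h n w)) \<and>
     (\<forall>n i w. i \<le> n \<and> w \<in> carrier (Fgrp (Suc n)) \<longrightarrow> h n (Fs n i w) = s n i (h (Suc n) w))}"

end

theory Submission
  imports Defs
begin


definition canc :: "nat \<times> bool \<Rightarrow> nat \<times> bool \<Rightarrow> bool" where
  "canc x y \<longleftrightarrow> fst y = fst x \<and> snd y \<noteq> snd x"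

definition cr :: "nat \<times> bool \<Rightarrow> word \<Rightarrow> word" where
  "cr x ys = (case ys of [] \<Rightarrow> [x]
      | y # zs \<Rightarrow> (if fst y = fst x \<and> snd y \<noteq> snd x then zs else x # y # zs))"

lemma red_Cons_cr: "red (x # xs) = cr x (red xs)"
  by (simp add: cr_def)

declare red.simps(2)[simp del]

lemma red_foldr: "red w = foldr cr w []"
  by (induct w) (simp_all add: red_Cons_cr)

lemma red_append: "red (u @ v) = foldr cr u (red v)"
  by (simp add: red_foldr)

lemma reduced_simps[simp]:
  "reduced []" "reduced [x]"
  "reduced (x # y # ys) \<longleftrightarrow> \<not> (fst x = fst y \<and> snd x \<noteq> snd y) \<and> reduced (y # ys)"
proof -
  show "reduced []" "reduced [x]" by (auto simp: reduced_def)
  show "reduced (x # y # ys) \<longleftrightarrow> \<not> (fst x = fst y \<and> snd x \<noteq> snd y) \<and> reduced (y # ys)"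
  proof
    assume r: "reduced (x # y # ys)"
    have "\<not> (fst x = fst y \<and> snd x \<noteq> snd y)" using r[unfolded reduced_def, rule_format, of 0] by simp
    moreover have "reduced (y # ys)" unfolding reduced_def
    proof (intro allI impI)
      fix k assume "Suc k < length (y # ys)"
      thus "\<not> (fst ((y # ys) ! k) = fst ((y # ys) ! Suc k) \<and> snd ((y # ys) ! k) \<noteq> snd ((y # ys) ! Suc k))"
        using r[unfolded reduced_def, rule_format, of "Suc k"] by simp
    qed
    ultimately show "\<not> (fst x = fst y \<and> snd x \<noteq> snd y) \<and> reduced (y # ys)" by blast
  next
    assume r: "\<not> (fst x = fst y \<and> snd x \<noteq> snd y) \<and> reduced (y # ys)"
    show "reduced (x # y # ys)" unfolding reduced_def
    proof (intro allI impI)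
      fix k assume k: "Suc k < length (x # y # ys)"
      show "\<not> (fst ((x # y # ys) ! k) = fst ((x # y # ys) ! Suc k) \<and> snd ((x # y # ys) ! k) \<noteq> snd ((x # y # ys) ! Suc k))"
      proof (cases k)
        case 0 thus ?thesis using r by simp
      next
        case (Suc k') thus ?thesis using r k unfolding reduced_def by auto
      qed
    qed
  qed
qed

lemma reduced_tl: "reduced (x # ys) \<Longrightarrow> reduced ys"
  by (cases ys) auto

lemma reduced_cr: "reduced ys \<Longrightarrow> reduced (cr x ys)"
  by (cases ys) (auto simp: cr_def dest: reduced_tl)

lemma cr_reduced: "reduced (x # ys) \<Longrightarrow> cr x ys = x # ys"
  by (cases ys) (auto simp: cr_def)

lemma reduced_red: "reduced (red w)"
  by (induct w) (simp_all add: red_Cons_cr reduced_cr)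

lemma red_reduced: "reduced w \<Longrightarrow> red w = w"
proof (induct w)
  case Nil thus ?case by simp
next
  case (Cons x w)
  thus ?case using reduced_tl[OF Cons.prems] by (simp add: red_Cons_cr cr_reduced)
qed

lemma set_cr: "set (cr x ys) \<subseteq> insert x (set ys)"
  by (cases ys) (auto simp: cr_def)

lemma set_foldr_cr: "set (foldr cr w zs) \<subseteq> set w \<union> set zs"
  apply (induct w) apply simp using set_cr by fastforce

lemma set_red: "set (red w) \<subseteq> set w"
  using set_foldr_cr[of w "[]"] by (simp add: red_foldr)

lemma cr_cancel: "reduced ys \<Longrightarrow> fst y = fst x \<Longrightarrow> snd y \<noteq> snd x \<Longrightarrow> cr x (cr y ys) = ys"
  apply (cases ys)
   apply (auto simp: cr_def split: list.splits)
  by (metis prod.collapse)+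

lemma inv_word_Cons: "inv_word (x # w) = inv_word w @ [(fst x, \<not> snd x)]"
  by (cases x) (simp add: inv_word_def)

lemma foldr_inv: "reduced zs \<Longrightarrow> foldr cr (inv_word w) (foldr cr w zs) = zs"
proof (induct w arbitrary: zs)
  case Nil thus ?case by (simp add: inv_word_def)
next
  case (Cons x w)
  have r: "reduced (foldr cr w zs)" using Cons.prems
    by (induct w) (simp_all add: reduced_cr)
  show ?case using Cons r by (simp add: inv_word_Cons cr_cancel)
qed

lemma inv_inv_word: "inv_word (inv_word w) = w"
  by (simp add: inv_word_def rev_map case_prod_beta o_def)

lemma foldr_inv': "reduced zs \<Longrightarrow> foldr cr w (foldr cr (inv_word w) zs) = zs"
  using foldr_inv[of zs "inv_word w"] by (simp add: inv_inv_word)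

lemma foldr_red_cr: "reduced r \<Longrightarrow> reduced zs \<Longrightarrow> foldr cr (cr x r) zs = cr x (foldr cr r zs)"
proof (cases r)
  case Nil thus ?thesis by (simp add: cr_def)
next
  case (Cons y r')
  assume rr: "reduced r" and zz: "reduced zs"
  have r': "reduced (foldr cr r' zs)" using zz by (induct r') (simp_all add: reduced_cr)
  show ?thesis
  proof (cases "fst y = fst x \<and> snd y \<noteq> snd x")
    case True
    thus ?thesis using Cons r' by (simp add: cr_def[of x "y # r'"] cr_cancel)
  next
    case False
    thus ?thesis using Cons by (auto simp add: cr_def[of x "y # r'"])
  qed
qed

lemma foldr_red: "reduced zs \<Longrightarrow> foldr cr (red u) zs = foldr cr u zs"
proof (induct u)
  case Nil thus ?case by simp
next
  case (Cons x u)
  thus ?case by (simp add: red_Cons_cr foldr_red_cr reduced_red)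
qed

lemma red_red_append: "red (red u @ red v) = red (u @ v)"
  by (simp add: red_append foldr_red reduced_red red_reduced)

lemma set_inv_word: "set (inv_word w) = (\<lambda>(j, b). (j, \<not> b)) ` set w"
  by (simp add: inv_word_def)



definition lv :: "('a,'b) monoid_scheme \<Rightarrow> (nat \<Rightarrow> 'a) \<Rightarrow> nat \<times> bool \<Rightarrow> 'a" where
  "lv G f x = (if snd x then f (fst x) else inv\<^bsub>G\<^esub> (f (fst x)))"

definition ev :: "('a,'b) monoid_scheme \<Rightarrow> (nat \<Rightarrow> 'a) \<Rightarrow> word \<Rightarrow> 'a" where
  "ev G f w = foldr (\<lambda>x a. lv G f x \<otimes>\<^bsub>G\<^esub> a) w \<one>\<^bsub>G\<^esub>"

lemma ev_Nil[simp]: "ev G f [] = \<one>\<^bsub>G\<^esub>" by (simp add: ev_def)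
lemma ev_Cons[simp]: "ev G f (x # w) = lv G f x \<otimes>\<^bsub>G\<^esub> ev G f w" by (simp add: ev_def)

lemma ev_cong: "(\<And>x. x \<in> set w \<Longrightarrow> f (fst x) = g (fst x)) \<Longrightarrow> ev G f w = ev G g w"
  by (induct w) (auto simp: lv_def)

lemma set_inv_word': "x \<in> set (inv_word u) \<longleftrightarrow> (fst x, \<not> snd x) \<in> set u"
  unfolding set_inv_word by (cases x) force

lemma fst_inv_word: "x \<in> set (inv_word u) \<Longrightarrow> \<exists>y \<in> set u. fst x = fst y"
  unfolding set_inv_word' by (metis fst_conv)

context group begin

lemma lv_closed: "f (fst x) \<in> carrier G \<Longrightarrow> lv G f x \<in> carrier G"
  by (simp add: lv_def)

lemma ev_closed: "(\<And>x. x \<in> set w \<Longrightarrow> f (fst x) \<in> carrier G) \<Longrightarrow> ev G f w \<in> carrier G"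
  by (induct w) (auto simp: lv_closed)

lemma ev_append: "(\<And>x. x \<in> set (u @ v) \<Longrightarrow> f (fst x) \<in> carrier G) \<Longrightarrow>
    ev G f (u @ v) = ev G f u \<otimes> ev G f v"
  by (induct u) (auto simp: lv_closed ev_closed m_assoc)

lemma ev_cr: "(\<And>x. x \<in> set (y # ys) \<Longrightarrow> f (fst x) \<in> carrier G) \<Longrightarrow>
    ev G f (cr y ys) = ev G f (y # ys)"
proof (cases ys)
  case Nil thus ?thesis by (simp add: cr_def)
next
  case (Cons z zs)
  assume c: "\<And>x. x \<in> set (y # ys) \<Longrightarrow> f (fst x) \<in> carrier G"
  show ?thesis
  proof (cases "fst z = fst y \<and> snd z \<noteq> snd y")
    case True
    have cz: "f (fst z) \<in> carrier G" "ev G f zs \<in> carrier G" using c Cons by (auto intro!: ev_closed)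
    have "lv G f y \<otimes> lv G f z = \<one>" using True cz(1) by (cases "snd y") (auto simp: lv_def)
    hence "lv G f y \<otimes> (lv G f z \<otimes> ev G f zs) = ev G f zs"
      using cz by (simp add: m_assoc[symmetric] lv_closed True)
    thus ?thesis using Cons True by (simp add: cr_def)
  next
    case False thus ?thesis using Cons by (auto simp: cr_def)
  qed
qed

lemma ev_foldr_cr: "(\<And>x. x \<in> set (w @ zs) \<Longrightarrow> f (fst x) \<in> carrier G) \<Longrightarrow>
    ev G f (foldr cr w zs) = ev G f (w @ zs)"
proof (induct w)
  case Nil thus ?case by simp
next
  case (Cons y w)
  have "ev G f (cr y (foldr cr w zs)) = ev G f (y # foldr cr w zs)"
    apply (rule ev_cr) using Cons.prems set_foldr_cr[of w zs] by auto
  thus ?case using Cons by simp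
qed

lemma ev_red: "(\<And>x. x \<in> set w \<Longrightarrow> f (fst x) \<in> carrier G) \<Longrightarrow> ev G f (red w) = ev G f w"
  using ev_foldr_cr[of w "[]" f] by (simp add: red_foldr)

lemma ev_inv_word: "(\<And>x. x \<in> set w \<Longrightarrow> f (fst x) \<in> carrier G) \<Longrightarrow>
    ev G f (inv_word w) = inv (ev G f w)"
proof (induct w)
  case Nil thus ?case by (simp add: inv_word_def)
next
  case (Cons y w)
  have c: "f (fst y) \<in> carrier G" "ev G f w \<in> carrier G" using Cons.prems by (auto intro!: ev_closed)
  have "ev G f (inv_word (y # w)) = ev G f (inv_word w) \<otimes> ev G f [(fst y, \<not> snd y)]"
    unfolding inv_word_Cons apply (rule ev_append)
  proof -
    fix z assume "z \<in> set (inv_word w @ [(fst y, \<not> snd y)])"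
    hence "z \<in> set (inv_word w) \<or> z = (fst y, \<not> snd y)" by auto
    hence "\<exists>z'\<in>set (y # w). fst z = fst z'"
    proof
      assume "z \<in> set (inv_word w)" thus ?thesis using fst_inv_word[of z w] by auto
    next
      assume "z = (fst y, \<not> snd y)" thus ?thesis by auto
    qed
    then obtain z' where "z' \<in> set (y # w)" "fst z = fst z'" by blast
    thus "f (fst z) \<in> carrier G" using Cons.prems[of z'] by simp
  qed
  also have "\<dots> = inv (ev G f w) \<otimes> lv G f (fst y, \<not> snd y)" using Cons c by (simp add: lv_closed)
  also have "\<dots> = inv (lv G f y \<otimes> ev G f w)"
    using c by (cases "snd y") (simp_all add: lv_def inv_mult_group)
  finally show ?case by simp
qed

lemma ev_concat: "(\<And>x y. x \<in> set w \<Longrightarrow> y \<in> set (\<sigma> (fst x)) \<Longrightarrow> f (fst y) \<in> carrier G) \<Longrightarrow>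
   ev G f (concat (map (\<lambda>(j, b). if b then \<sigma> j else inv_word (\<sigma> j)) w)) = ev G (\<lambda>j. ev G f (\<sigma> j)) w"
proof (induct w)
  case Nil thus ?case by simp
next
  case (Cons x w)
  obtain j b where x: "x = (j, b)" by (cases x)
  have c1: "\<And>y. y \<in> set (\<sigma> j) \<Longrightarrow> f (fst y) \<in> carrier G"
  proof -
    fix y assume "y \<in> set (\<sigma> j)" thus "f (fst y) \<in> carrier G" using Cons.prems[of x y] x by simp
  qed
  have c2: "\<And>y. y \<in> set (concat (map (\<lambda>(j, b). if b then \<sigma> j else inv_word (\<sigma> j)) w)) \<Longrightarrow> f (fst y) \<in> carrier G"
    using Cons.prems by (fastforce simp: set_inv_word split: if_splits)
  have c3: "\<And>y. y \<in> set (if b then \<sigma> j else inv_word (\<sigma> j)) \<Longrightarrow> f (fst y) \<in> carrier G"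
    using c1 fst_inv_word[of _ "\<sigma> j"] by (cases b) (simp, metis)
  have "ev G f (concat (map (\<lambda>(j, b). if b then \<sigma> j else inv_word (\<sigma> j)) (x # w)))
     = ev G f (if b then \<sigma> j else inv_word (\<sigma> j)) \<otimes> ev G f (concat (map (\<lambda>(j, b). if b then \<sigma> j else inv_word (\<sigma> j)) w))"
  proof -
    let ?A = "if b then \<sigma> j else inv_word (\<sigma> j)"
    let ?B = "concat (map (\<lambda>(j, b). if b then \<sigma> j else inv_word (\<sigma> j)) w)"
    have cc: "\<And>y. y \<in> set (?A @ ?B) \<Longrightarrow> f (fst y) \<in> carrier G"
    proof -
      fix y assume "y \<in> set (?A @ ?B)"
      hence "y \<in> set ?A \<or> y \<in> set ?B" by (simp only: set_append Un_iff)
      thus "f (fst y) \<in> carrier G" using c2 c3 by blast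
    qed
    show ?thesis using x ev_append[of ?A ?B f, OF cc] by simp
  qed
  also have "ev G f (if b then \<sigma> j else inv_word (\<sigma> j)) = lv G (\<lambda>j. ev G f (\<sigma> j)) x"
    using x c1 by (simp add: lv_def ev_inv_word)
  also have "ev G f (concat (map (\<lambda>(j, b). if b then \<sigma> j else inv_word (\<sigma> j)) w)) = ev G (\<lambda>j. ev G f (\<sigma> j)) w"
    using Cons.hyps Cons.prems by (metis list.set_intros(2))
  finally show ?case by simp
qed

end

lemma ev_hom:
  assumes G: "group G" and H: "group H" and h: "h \<in> hom G H"
    and c: "\<And>x. x \<in> set w \<Longrightarrow> f (fst x) \<in> carrier G"
  shows "h (ev G f w) = ev H (\<lambda>j. h (f j)) w"
proof -
  interpret group_hom G H h using G H h by (simp add: group_hom_def group_hom_axioms_def)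
  show ?thesis using c
    by (induct w) (auto simp: lv_def G.ev_closed G.lv_closed)
qed



locale cosimp =
  fixes G :: "nat \<Rightarrow> ('a, 'b) monoid_scheme" and d s
  assumes cg: "cosimplicial_group G d s"
begin

lemma grp: "group (G n)" using cg by (simp add: cosimplicial_group_def)
lemma dhom: "i \<le> Suc n \<Longrightarrow> d n i \<in> hom (G n) (G (Suc n))" using cg by (simp add: cosimplicial_group_def)
lemma shom: "i \<le> n \<Longrightarrow> s n i \<in> hom (G (Suc n)) (G n)" using cg by (simp add: cosimplicial_group_def)
lemma I1all: "\<forall>n i j x. i < j \<and> j \<le> Suc (Suc n) \<and> x \<in> carrier (G n) \<longrightarrow> d (Suc n) j (d n i x) = d (Suc n) i (d n (j - 1) x)"
  using cg unfolding cosimplicial_group_def by (elim conjE) assumption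
lemma I2all: "\<forall>n i j x. i < j \<and> j \<le> Suc n \<and> x \<in> carrier (G (Suc n)) \<longrightarrow> s (Suc n) j (d (Suc n) i x) = d n i (s n (j - 1) x)"
  using cg unfolding cosimplicial_group_def by (elim conjE) assumption
lemma I3all: "\<forall>n j x. j \<le> n \<and> x \<in> carrier (G n) \<longrightarrow> s n j (d n j x) = x \<and> s n j (d n (Suc j) x) = x"
  using cg unfolding cosimplicial_group_def by (elim conjE) assumption
lemma I4all: "\<forall>n i j x. Suc j < i \<and> i \<le> Suc (Suc n) \<and> x \<in> carrier (G (Suc n)) \<longrightarrow> s (Suc n) j (d (Suc n) i x) = d n (i - 1) (s n j x)"
  using cg unfolding cosimplicial_group_def by (elim conjE) assumption

lemma I1: "i < j \<Longrightarrow> j \<le> Suc (Suc n) \<Longrightarrow> x \<in> carrier (G n) \<Longrightarrow>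
        d (Suc n) j (d n i x) = d (Suc n) i (d n (j - 1) x)"
  using I1all by blast
lemma I2: "i < j \<Longrightarrow> j \<le> Suc n \<Longrightarrow> x \<in> carrier (G (Suc n)) \<Longrightarrow>
        s (Suc n) j (d (Suc n) i x) = d n i (s n (j - 1) x)"
  using I2all by blast
lemma I3: "j \<le> n \<Longrightarrow> x \<in> carrier (G n) \<Longrightarrow> s n j (d n j x) = x"
  using I3all by blast
lemma I3': "j \<le> n \<Longrightarrow> x \<in> carrier (G n) \<Longrightarrow> s n j (d n (Suc j) x) = x"
  using I3all by blast
lemma I4: "Suc j < i \<Longrightarrow> i \<le> Suc (Suc n) \<Longrightarrow> x \<in> carrier (G (Suc n)) \<Longrightarrow>
        s (Suc n) j (d (Suc n) i x) = d n (i - 1) (s n j x)"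
  using I4all by blast

lemma dgh: "i \<le> Suc n \<Longrightarrow> group_hom (G n) (G (Suc n)) (d n i)"
  using grp dhom by (simp add: group_hom_def group_hom_axioms_def)
lemma sgh: "i \<le> n \<Longrightarrow> group_hom (G (Suc n)) (G n) (s n i)"
  using grp shom by (simp add: group_hom_def group_hom_axioms_def)

lemma dc: "i \<le> Suc n \<Longrightarrow> x \<in> carrier (G n) \<Longrightarrow> d n i x \<in> carrier (G (Suc n))"
  using group_hom.hom_closed[OF dgh] by blast
lemma dm: "i \<le> Suc n \<Longrightarrow> x \<in> carrier (G n) \<Longrightarrow> y \<in> carrier (G n) \<Longrightarrow>
    d n i (x \<otimes>\<^bsub>G n\<^esub> y) = d n i x \<otimes>\<^bsub>G (Suc n)\<^esub> d n i y"
  using group_hom.hom_mult[OF dgh] by blast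
lemma d1: "i \<le> Suc n \<Longrightarrow> d n i \<one>\<^bsub>G n\<^esub> = \<one>\<^bsub>G (Suc n)\<^esub>"
  using group_hom.hom_one[OF dgh] by blast
lemma sc: "i \<le> n \<Longrightarrow> x \<in> carrier (G (Suc n)) \<Longrightarrow> s n i x \<in> carrier (G n)"
  using group_hom.hom_closed[OF sgh] by blast
lemma sm: "i \<le> n \<Longrightarrow> x \<in> carrier (G (Suc n)) \<Longrightarrow> y \<in> carrier (G (Suc n)) \<Longrightarrow>
    s n i (x \<otimes>\<^bsub>G (Suc n)\<^esub> y) = s n i x \<otimes>\<^bsub>G n\<^esub> s n i y"
  using group_hom.hom_mult[OF sgh] by blast
lemma s1: "i \<le> n \<Longrightarrow> s n i \<one>\<^bsub>G (Suc n)\<^esub> = \<one>\<^bsub>G n\<^esub>"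
  using group_hom.hom_one[OF sgh] by blast

lemma dpow_closed: "i \<le> Suc m \<Longrightarrow> x \<in> carrier (G m) \<Longrightarrow> dpow d i k m x \<in> carrier (G (m + k))"
  by (induct k) (auto intro!: dc)

lemma dpow_Suc': "dpow d i (Suc k) m x = dpow d i k (Suc m) (d m i x)"
  by (induct k) simp_all

lemma dpow_add: "dpow d i (a + c) m x = dpow d i a (m + c) (dpow d i c m x)"
  by (induct a) (simp_all add: ac_simps)

lemma dpow0_mult: "x \<in> carrier (G m) \<Longrightarrow> y \<in> carrier (G m) \<Longrightarrow>
   dpow d 0 k m (x \<otimes>\<^bsub>G m\<^esub> y) = dpow d 0 k m x \<otimes>\<^bsub>G (m + k)\<^esub> dpow d 0 k m y"
  by (induct k) (simp_all add: dm dpow_closed)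

lemma dpow0_one: "dpow d 0 k m \<one>\<^bsub>G m\<^esub> = \<one>\<^bsub>G (m + k)\<^esub>"
  by (induct k) (simp_all add: d1)

lemma C1: "n = m + t \<Longrightarrow> t \<le> i \<Longrightarrow> i \<le> Suc n \<Longrightarrow> x \<in> carrier (G m) \<Longrightarrow>
    d n i (dpow d 0 t m x) = dpow d 0 t (Suc m) (d m (i - t) x)"
proof (induct t arbitrary: n i)
  case 0 thus ?case by simp
next
  case (Suc t)
  have "d n i (dpow d 0 (Suc t) m x) = d (Suc (m + t)) i (d (m + t) 0 (dpow d 0 t m x))"
    using Suc.prems by simp
  also have "\<dots> = d (Suc (m + t)) 0 (d (m + t) (i - 1) (dpow d 0 t m x))"
    using Suc.prems by (intro I1) (auto intro!: dpow_closed)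
  also have "d (m + t) (i - 1) (dpow d 0 t m x) = dpow d 0 t (Suc m) (d m (i - 1 - t) x)"
    using Suc.prems by (intro Suc.hyps) auto
  finally show ?case by simp
qed

lemma S1: "n = m + t \<Longrightarrow> t \<le> i \<Longrightarrow> i \<le> n \<Longrightarrow> x \<in> carrier (G (Suc m)) \<Longrightarrow>
    s n i (dpow d 0 t (Suc m) x) = dpow d 0 t m (s m (i - t) x)"
proof (induct t arbitrary: n i)
  case 0 thus ?case by simp
next
  case (Suc t)
  have "s n i (dpow d 0 (Suc t) (Suc m) x) = s (Suc (m + t)) i (d (Suc (m + t)) 0 (dpow d 0 t (Suc m) x))"
    using Suc.prems by simp
  also have "\<dots> = d (m + t) 0 (s (m + t) (i - 1) (dpow d 0 t (Suc m) x))"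
    using Suc.prems dpow_closed[of 0 "Suc m" x t] by (intro I2) auto
  also have "s (m + t) (i - 1) (dpow d 0 t (Suc m) x) = dpow d 0 t m (s m (i - 1 - t) x)"
    using Suc.prems by (intro Suc.hyps) auto
  finally show ?case by simp
qed

context
  fixes b assumes bZ: "b \<in> Z1 G d"
begin

abbreviation e :: "nat \<Rightarrow> 'a" where "e k \<equiv> dpow d 2 k 1 b"

lemma bc: "b \<in> carrier (G 1)" using bZ by (simp add: Z1_def)
lemma bcoc: "d 1 2 b \<otimes>\<^bsub>G 2\<^esub> d 1 0 b = d 1 1 b" using bZ by (simp add: Z1_def)

lemma e_closed: "e k \<in> carrier (G (Suc k))"
  using dpow_closed[of 2 1 b k] bc by simp

lemma e_Suc: "e (Suc k) = d (Suc k) 2 (e k)" by simp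

lemma E12: "2 \<le> i \<Longrightarrow> i \<le> k + 2 \<Longrightarrow> d (Suc k) i (e k) = e (Suc k)"
proof (induct k arbitrary: i)
  case 0 hence "i = 2" by simp
  thus ?case by simp
next
  case (Suc k)
  show ?case
  proof (cases "i = 2")
    case True thus ?thesis by simp
  next
    case False
    have "d (Suc (Suc k)) i (e (Suc k)) = d (Suc (Suc k)) i (d (Suc k) 2 (e k))" by simp
    also have "\<dots> = d (Suc (Suc k)) 2 (d (Suc k) (i - 1) (e k))"
      using Suc.prems False e_closed[of k] by (intro I1) auto
    also have "d (Suc k) (i - 1) (e k) = e (Suc k)"
      using Suc.prems False by (intro Suc.hyps) auto
    finally show ?thesis by simp
  qed
qed

lemma E3: "d (Suc k) 1 (e k) = e (Suc k) \<otimes>\<^bsub>G (Suc (Suc k))\<^esub> d (Suc k) 0 (e k)"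
proof (induct k)
  case 0 thus ?case using bcoc by (simp add: numeral_2_eq_2)
next
  case (Suc k)
  have "d (Suc (Suc k)) 1 (e (Suc k)) = d (Suc (Suc k)) 1 (d (Suc k) 2 (e k))" by simp
  also have "\<dots> = d (Suc (Suc k)) 3 (d (Suc k) 1 (e k))"
    using I1[of 1 3 "Suc k" "e k"] e_closed[of k] by simp
  also have "\<dots> = d (Suc (Suc k)) 3 (e (Suc k)) \<otimes>\<^bsub>G (Suc (Suc (Suc k)))\<^esub> d (Suc (Suc k)) 3 (d (Suc k) 0 (e k))"
    unfolding Suc using e_closed[of k] e_closed[of "Suc k"] by (intro dm) (auto intro!: dc)
  also have "d (Suc (Suc k)) 3 (e (Suc k)) = e (Suc (Suc k))"
    by (intro E12) auto
  also have "d (Suc (Suc k)) 3 (d (Suc k) 0 (e k)) = d (Suc (Suc k)) 0 (d (Suc k) 2 (e k))"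
    using I1[of 0 3 "Suc k" "e k"] e_closed[of k] by simp
  finally show ?case by simp
qed

lemma Sone: "s k 0 (e k) = \<one>\<^bsub>G k\<^esub>"
proof (induct k)
  case 0
  have c1: "d 0 1 (s 0 0 b) \<in> carrier (G 1)" using bc by (auto intro!: dc sc)
  have "s 1 0 (d 1 2 b \<otimes>\<^bsub>G 2\<^esub> d 1 0 b) = s 1 0 (d 1 1 b)" using bcoc by simp
  hence "s 1 0 (d 1 2 b) \<otimes>\<^bsub>G 1\<^esub> s 1 0 (d 1 0 b) = s 1 0 (d 1 1 b)"
    using sm[of 0 1 "d 1 2 b" "d 1 0 b"] bc dc[of 2 1 b] dc[of 0 1 b] by (simp add: numeral_2_eq_2)
  moreover have "s 1 0 (d 1 0 b) = b" using I3[of 0 1 b] bc by simp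
  moreover have "s 1 0 (d 1 1 b) = b" using I3'[of 0 1 b] bc by simp
  moreover have "s 1 0 (d 1 2 b) = d 0 1 (s 0 0 b)" using I4[of 0 2 0 b] bc by simp
  ultimately have "d 0 1 (s 0 0 b) \<otimes>\<^bsub>G 1\<^esub> b = b" by simp
  hence "d 0 1 (s 0 0 b) = \<one>\<^bsub>G 1\<^esub>" using group.r_cancel_one[OF grp[of 1], where x=b and a="d 0 1 (s 0 0 b)"] c1 bc by simp
  hence "s 0 0 (d 0 1 (s 0 0 b)) = s 0 0 \<one>\<^bsub>G 1\<^esub>" by simp
  moreover have "s 0 0 (d 0 1 (s 0 0 b)) = s 0 0 b" using I3'[of 0 0 "s 0 0 b"] bc sc[of 0 0 b] by simp
  ultimately show ?case using s1[of 0 0] by simp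
next
  case (Suc k)
  have "s (Suc k) 0 (e (Suc k)) = s (Suc k) 0 (d (Suc k) 2 (e k))" by simp
  also have "\<dots> = d k 1 (s k 0 (e k))" using I4[of 0 2 k "e k"] e_closed[of k] by simp
  finally show ?case using Suc d1[of 1 k] by simp
qed

lemma Sid: "1 \<le> i \<Longrightarrow> i \<le> k \<Longrightarrow> s k i (e k) = e (k - 1)"
proof (induct k arbitrary: i)
  case 0 thus ?case by simp
next
  case (Suc k)
  have ek: "e (Suc k) = d (Suc k) 2 (e k)" by simp
  show ?case
  proof (cases "i \<le> 2")
    case True
    hence "i = 1 \<or> i = 2" using Suc.prems by auto
    thus ?thesis
    proof
      assume "i = 1" thus ?thesis using I3'[of 1 "Suc k" "e k"] e_closed[of k] by (simp add: numeral_2_eq_2)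
    next
      assume "i = 2" thus ?thesis using I3[of 2 "Suc k" "e k"] e_closed[of k] Suc.prems by simp
    qed
  next
    case False
    have "s (Suc k) i (e (Suc k)) = d k 2 (s k (i - 1) (e k))"
      unfolding ek using False Suc.prems e_closed[of k] by (intro I2) auto
    also have "s k (i - 1) (e k) = e (k - 1)" using False Suc.prems by (intro Suc.hyps) auto
    also have "d k 2 (e (k - 1)) = e k" using False Suc.prems
      by (cases k) auto
    finally show ?thesis by simp
  qed
qed


abbreviation fb :: "nat \<Rightarrow> nat \<Rightarrow> 'a" where
  "fb n j \<equiv> dpow d 0 (j - 1) (Suc n - j) (e (n - j))"

lemma fb_alt: "1 \<le> j \<Longrightarrow> j \<le> n \<Longrightarrow> fb n j = dpow d 0 (j - 1) (Suc (n - j)) (e (n - j))"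
  by (simp only: Suc_diff_le[of j n])

lemma fb_closed: "1 \<le> j \<Longrightarrow> j \<le> n \<Longrightarrow> fb n j \<in> carrier (G n)"
  using dpow_closed[of 0 "Suc (n - j)" "e (n - j)" "j - 1"] e_closed[of "n - j"]
  by (simp add: Suc_diff_le)

lemma D0: assumes "1 \<le> j" "j \<le> n" shows "d n 0 (fb n j) = fb (Suc n) (Suc j)"
proof -
  obtain t where t: "j = Suc t" using assms by (cases j) auto
  have "fb (Suc n) (Suc j) = dpow d 0 (Suc t) (Suc (n - j)) (e (n - j))"
    using assms by (simp add: Suc_diff_le t Suc_diff_Suc)
  also have "\<dots> = d (Suc (n - j) + t) 0 (dpow d 0 t (Suc (n - j)) (e (n - j)))" by simp
  also have "Suc (n - j) + t = n" using assms t by simp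
  finally show ?thesis using assms by (simp add: Suc_diff_le t)
qed

lemma Dgt: assumes "1 \<le> j" "j < i" "i \<le> Suc n" shows "d n i (fb n j) = fb (Suc n) j"
proof -
  define t where "t = j - 1"
  define k where "k = n - j"
  have jn: "j \<le> n" using assms by simp
  have A: "fb n j = dpow d 0 t (Suc k) (e k)" using assms jn by (simp add: Suc_diff_le t_def k_def)
  have B: "fb (Suc n) j = dpow d 0 t (Suc (Suc k)) (e (Suc k))" using assms jn
    by (simp add: Suc_diff_le t_def k_def Suc_diff_le)
  have "d n i (dpow d 0 t (Suc k) (e k)) = dpow d 0 t (Suc (Suc k)) (d (Suc k) (i - t) (e k))"
    using assms jn e_closed[of k] by (intro C1) (auto simp: t_def k_def)
  also have "d (Suc k) (i - t) (e k) = e (Suc k)"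
    using assms jn by (intro E12) (auto simp: t_def k_def)
  finally show ?thesis using A B by simp
qed

lemma Deq: assumes "1 \<le> j" "j \<le> n"
  shows "d n j (fb n j) = fb (Suc n) j \<otimes>\<^bsub>G (Suc n)\<^esub> fb (Suc n) (Suc j)"
proof -
  define t where "t = j - 1"
  define k where "k = n - j"
  have A: "fb n j = dpow d 0 t (Suc k) (e k)" using assms by (simp add: Suc_diff_le t_def k_def)
  have B: "fb (Suc n) j = dpow d 0 t (Suc (Suc k)) (e (Suc k))" using assms
    by (simp add: Suc_diff_le t_def k_def Suc_diff_le)
  have B2: "fb (Suc n) (Suc j) = dpow d 0 (Suc t) (Suc k) (e k)" using assms
    by (simp add: Suc_diff_le t_def k_def)
  have "d n j (dpow d 0 t (Suc k) (e k)) = dpow d 0 t (Suc (Suc k)) (d (Suc k) (j - t) (e k))"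
    using assms e_closed[of k] by (intro C1) (auto simp: t_def k_def)
  also have "j - t = 1" using assms by (simp add: t_def)
  also have "d (Suc k) 1 (e k) = e (Suc k) \<otimes>\<^bsub>G (Suc (Suc k))\<^esub> d (Suc k) 0 (e k)" by (rule E3)
  also have "dpow d 0 t (Suc (Suc k)) (e (Suc k) \<otimes>\<^bsub>G (Suc (Suc k))\<^esub> d (Suc k) 0 (e k))
      = dpow d 0 t (Suc (Suc k)) (e (Suc k)) \<otimes>\<^bsub>G (Suc (Suc k) + t)\<^esub> dpow d 0 t (Suc (Suc k)) (d (Suc k) 0 (e k))"
    using e_closed[of k] e_closed[of "Suc k"] by (intro dpow0_mult) (auto intro!: dc)
  also have "dpow d 0 t (Suc (Suc k)) (d (Suc k) 0 (e k)) = dpow d 0 (Suc t) (Suc k) (e k)"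
    by (simp only: dpow_Suc')
  also have "Suc (Suc k) + t = Suc n" using assms by (simp add: t_def k_def)
  finally show ?thesis using A B B2 by simp
qed

lemma Dlt: assumes "1 \<le> i" "i < j" "j \<le> n" shows "d n i (fb n j) = fb (Suc n) (Suc j)"
proof -
  define t where "t = j - 1"
  define k where "k = n - j"
  define Y where "Y = dpow d 0 (t - i) (Suc k) (e k)"
  have A: "fb n j = dpow d 0 t (Suc k) (e k)" using assms by (simp add: Suc_diff_le t_def k_def)
  have B2: "fb (Suc n) (Suc j) = dpow d 0 (Suc t) (Suc k) (e k)" using assms
    by (simp add: Suc_diff_le t_def k_def)
  have Yc: "Y \<in> carrier (G (Suc k + (t - i)))" unfolding Y_def
    using e_closed[of k] by (intro dpow_closed) auto
  have "dpow d 0 t (Suc k) (e k) = dpow d 0 i (Suc k + (t - i)) Y"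
    unfolding Y_def using dpow_add[of 0 i "t - i" "Suc k" "e k"] assms by (simp add: t_def)
  also have "d n i \<dots> = dpow d 0 i (Suc (Suc k + (t - i))) (d (Suc k + (t - i)) (i - i) Y)"
    using assms Yc by (intro C1) (auto simp: t_def k_def)
  also have "d (Suc k + (t - i)) (i - i) Y = dpow d 0 (Suc (t - i)) (Suc k) (e k)"
    by (simp add: Y_def)
  also have "dpow d 0 i (Suc (Suc k + (t - i))) (dpow d 0 (Suc (t - i)) (Suc k) (e k))
     = dpow d 0 (i + Suc (t - i)) (Suc k) (e k)"
    using dpow_add[of 0 i "Suc (t - i)" "Suc k" "e k"] by simp
  also have "i + Suc (t - i) = Suc t" using assms by (simp add: t_def)
  finally show ?thesis using A B2 by simp
qed

lemma Seq: assumes "i \<le> n" shows "s n i (fb (Suc n) (Suc i)) = \<one>\<^bsub>G n\<^esub>"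
proof -
  define k where "k = n - i"
  have A: "fb (Suc n) (Suc i) = dpow d 0 i (Suc k) (e k)" using assms by (simp add: Suc_diff_le k_def)
  have "s n i (dpow d 0 i (Suc k) (e k)) = dpow d 0 i k (s k (i - i) (e k))"
    using assms e_closed[of k] by (intro S1) (auto simp: k_def)
  also have "s k (i - i) (e k) = \<one>\<^bsub>G k\<^esub>" using Sone by simp
  also have "dpow d 0 i k \<one>\<^bsub>G k\<^esub> = \<one>\<^bsub>G (k + i)\<^esub>" by (rule dpow0_one)
  finally show ?thesis using A assms by (simp add: k_def)
qed

lemma Sle: assumes "1 \<le> j" "j \<le> i" "i \<le> n" shows "s n i (fb (Suc n) j) = fb n j"
proof -
  define t where "t = j - 1"
  define k where "k = Suc n - j"
  have A: "fb (Suc n) j = dpow d 0 t (Suc k) (e k)" using assms by (simp add: Suc_diff_le t_def k_def Suc_diff_le)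
  have B: "fb n j = dpow d 0 t k (e (k - 1))" using assms by (simp add: t_def k_def)
  have "s n i (dpow d 0 t (Suc k) (e k)) = dpow d 0 t k (s k (i - t) (e k))"
    using assms e_closed[of k] by (intro S1) (auto simp: k_def t_def)
  also have "s k (i - t) (e k) = e (k - 1)"
    using assms by (intro Sid) (auto simp: k_def t_def)
  finally show ?thesis using A B by simp
qed

lemma Sgt: assumes "Suc i < j" "j \<le> Suc n" shows "s n i (fb (Suc n) j) = fb n (j - 1)"
proof -
  define t where "t = j - 1"
  define k where "k = Suc n - j"
  define L where "L = Suc k + (t - i - 1)"
  define Y where "Y = dpow d 0 (t - i - 1) (Suc k) (e k)"
  have A: "fb (Suc n) j = dpow d 0 t (Suc k) (e k)" using assms by (simp add: Suc_diff_le t_def k_def Suc_diff_le)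
  have B: "fb n (j - 1) = dpow d 0 (t - 1) (Suc k) (e k)" using assms
    by (simp add: t_def k_def Suc_diff_le)
  have Yc: "Y \<in> carrier (G L)" unfolding Y_def L_def
    using e_closed[of k] by (intro dpow_closed) auto
  have "dpow d 0 t (Suc k) (e k) = dpow d 0 i (Suc k + (t - i)) (dpow d 0 (t - i) (Suc k) (e k))"
    using dpow_add[of 0 i "t - i" "Suc k" "e k"] assms by (simp add: t_def)
  also have "dpow d 0 (t - i) (Suc k) (e k) = d L 0 Y"
    using assms by (simp add: Y_def L_def t_def Suc_diff_Suc[symmetric])
  also have "Suc k + (t - i) = Suc L" using assms by (simp add: L_def t_def)
  also have "s n i (dpow d 0 i (Suc L) (d L 0 Y)) = dpow d 0 i L (s L (i - i) (d L 0 Y))"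
    using assms Yc by (intro S1) (auto simp: L_def t_def k_def intro!: dc)
  also have "s L (i - i) (d L 0 Y) = Y" using I3[of 0 L Y] Yc by simp
  also have "dpow d 0 i L Y = dpow d 0 (i + (t - i - 1)) (Suc k) (e k)"
    using dpow_add[of 0 i "t - i - 1" "Suc k" "e k"] by (simp add: Y_def L_def)
  also have "i + (t - i - 1) = t - 1" using assms by (simp add: t_def)
  finally show ?thesis using A B by simp
qed

end
end


lemma carrier_Fgrp: "w \<in> carrier (Fgrp n) \<longleftrightarrow> reduced w \<and> (\<forall>x\<in>set w. 1 \<le> fst x \<and> fst x \<le> n)"
  by (simp add: Fgrp_def)
lemma mult_Fgrp: "u \<otimes>\<^bsub>Fgrp n\<^esub> v = red (u @ v)" by (simp add: Fgrp_def)
lemma one_Fgrp: "\<one>\<^bsub>Fgrp n\<^esub> = []" by (simp add: Fgrp_def)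

lemma red_carrier: "(\<And>x. x \<in> set w \<Longrightarrow> 1 \<le> fst x \<and> fst x \<le> n) \<Longrightarrow> red w \<in> carrier (Fgrp n)"
  using set_red[of w] by (auto simp: carrier_Fgrp reduced_red)

lemma set_concat_subst: "y \<in> set (concat (map (\<lambda>(j, b). if b then \<sigma> j else inv_word (\<sigma> j)) w)) \<Longrightarrow>
   \<exists>x\<in>set w. \<exists>z\<in>set (\<sigma> (fst x)). fst y = fst z"
proof (induct w)
  case Nil thus ?case by simp
next
  case (Cons x w)
  obtain j c where x: "x = (j, c)" by (cases x)
  from Cons.prems have "y \<in> set (if c then \<sigma> j else inv_word (\<sigma> j)) \<or>
      y \<in> set (concat (map (\<lambda>(j, b). if b then \<sigma> j else inv_word (\<sigma> j)) w))" by (simp add: x)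
  thus ?case
  proof
    assume "y \<in> set (if c then \<sigma> j else inv_word (\<sigma> j))"
    hence "\<exists>z\<in>set (\<sigma> j). fst y = fst z" using fst_inv_word[of y "\<sigma> j"] by (cases c) auto
    thus ?case using x by auto
  next
    assume "y \<in> set (concat (map (\<lambda>(j, b). if b then \<sigma> j else inv_word (\<sigma> j)) w))"
    thus ?case using Cons.hyps by auto
  qed
qed

lemma subst_carrier: "(\<And>x z. x \<in> set w \<Longrightarrow> z \<in> set (\<sigma> (fst x)) \<Longrightarrow> 1 \<le> fst z \<and> fst z \<le> m)
   \<Longrightarrow> subst \<sigma> w \<in> carrier (Fgrp m)"
  unfolding subst_def
proof (rule red_carrier)
  fix y assume "y \<in> set (concat (map (\<lambda>(j, b). if b then \<sigma> j else inv_word (\<sigma> j)) w))"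
  then obtain x z where "x \<in> set w" "z \<in> set (\<sigma> (fst x))" "fst y = fst z"
    using set_concat_subst by blast
  moreover assume "\<And>x z. x \<in> set w \<Longrightarrow> z \<in> set (\<sigma> (fst x)) \<Longrightarrow> 1 \<le> fst z \<and> fst z \<le> m"
  ultimately show "1 \<le> fst y \<and> fst y \<le> m" by metis
qed

definition sd :: "nat \<Rightarrow> nat \<Rightarrow> nat \<Rightarrow> word" where
  "sd n i = (\<lambda>j.
      if i = 0 then gen (Suc j)
      else if i = Suc n then gen j
      else if j < i then gen j
      else if j = i then [(i, True), (Suc i, True)]
      else gen (Suc j))"

definition ss :: "nat \<Rightarrow> nat \<Rightarrow> nat \<Rightarrow> word" where
  "ss n i = (\<lambda>j.
      if j \<le> i then gen j
      else if j = Suc i then []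
      else gen (j - 1))"

lemma Fd_sd: "Fd n i = subst (sd n i)" by (simp add: Fd_def sd_def)
lemma Fs_ss: "Fs n i = subst (ss n i)" by (simp add: Fs_def ss_def)

lemma Fd_carrier: assumes "w \<in> carrier (Fgrp n)" "i \<le> Suc n" shows "Fd n i w \<in> carrier (Fgrp (Suc n))"
  unfolding Fd_sd
proof (rule subst_carrier)
  fix x z assume "x \<in> set w" "z \<in> set (sd n i (fst x))"
  thus "1 \<le> fst z \<and> fst z \<le> Suc n" using assms
    by (auto simp: carrier_Fgrp sd_def gen_def split: if_splits)
qed

lemma Fs_carrier: assumes "w \<in> carrier (Fgrp (Suc n))" "i \<le> n" shows "Fs n i w \<in> carrier (Fgrp n)"
  unfolding Fs_ss
proof (rule subst_carrier)
  fix x z assume "x \<in> set w" "z \<in> set (ss n i (fst x))"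
  thus "1 \<le> fst z \<and> fst z \<le> n" using assms
    by (auto simp: carrier_Fgrp ss_def gen_def split: if_splits)
qed

lemma subst_gen: "subst \<sigma> (gen j) = red (\<sigma> j)" by (simp add: subst_def gen_def)
lemma red_gen[simp]: "red (gen k) = gen k" by (simp add: gen_def red_Cons_cr cr_def)
lemma red_pair: "red [(i, True), (Suc i, True)] = [(i, True), (Suc i, True)]"
  by (rule red_reduced) simp

lemma Fd_gen: "Fd n i (gen j) = red (sd n i j)" by (simp add: Fd_sd subst_gen)

lemma gen_carrier: "1 \<le> j \<Longrightarrow> j \<le> n \<Longrightarrow> gen j \<in> carrier (Fgrp n)"
  by (simp add: carrier_Fgrp gen_def)

context group begin
lemma ev_subst: "(\<And>x y. x \<in> set w \<Longrightarrow> y \<in> set (\<sigma> (fst x)) \<Longrightarrow> f (fst y) \<in> carrier G) \<Longrightarrow>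
   ev G f (subst \<sigma> w) = ev G (\<lambda>j. ev G f (\<sigma> j)) w"
proof -
  assume A: "\<And>x y. x \<in> set w \<Longrightarrow> y \<in> set (\<sigma> (fst x)) \<Longrightarrow> f (fst y) \<in> carrier G"
  have B: "\<And>y. y \<in> set (concat (map (\<lambda>(j, b). if b then \<sigma> j else inv_word (\<sigma> j)) w)) \<Longrightarrow> f (fst y) \<in> carrier G"
  proof -
    fix y assume "y \<in> set (concat (map (\<lambda>(j, b). if b then \<sigma> j else inv_word (\<sigma> j)) w))"
    then obtain x z where "x \<in> set w" "z \<in> set (\<sigma> (fst x))" "fst y = fst z"
      using set_concat_subst by blast
    thus "f (fst y) \<in> carrier G" using A by metis
  qed
  show ?thesis unfolding subst_def using ev_red[of "concat (map (\<lambda>(j, b). if b then \<sigma> j else inv_word (\<sigma> j)) w)" f, OF B] ev_concat[of w \<sigma> f, OF A] by simp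
qed

lemma ev_gen: "f k \<in> carrier G \<Longrightarrow> ev G f (gen k) = f k"
  by (simp add: gen_def lv_def)
end



definition fbv :: "(nat \<Rightarrow> nat \<Rightarrow> 'a \<Rightarrow> 'a) \<Rightarrow> 'a \<Rightarrow> nat \<Rightarrow> nat \<Rightarrow> 'a" where
  "fbv d b n j = dpow d 0 (j - 1) (Suc n - j) (dpow d 2 (n - j) 1 b)"

definition hbm :: "(nat \<Rightarrow> ('a,'b) monoid_scheme) \<Rightarrow> (nat \<Rightarrow> nat \<Rightarrow> 'a \<Rightarrow> 'a) \<Rightarrow> 'a \<Rightarrow> nat \<Rightarrow> word \<Rightarrow> 'a" where
  "hbm G d b n w = (if w \<in> carrier (Fgrp n)
      then ev (G n) (fbv d b n) w else undefined)"

context cosimp begin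
context
  fixes b assumes bZ: "b \<in> Z1 G d"
begin

lemma fbv_closed: "1 \<le> j \<Longrightarrow> j \<le> n \<Longrightarrow> fbv d b n j \<in> carrier (G n)"
  unfolding fbv_def by (rule fb_closed[OF bZ])
lemma fbv_D0: "1 \<le> j \<Longrightarrow> j \<le> n \<Longrightarrow> d n 0 (fbv d b n j) = fbv d b (Suc n) (Suc j)"
  unfolding fbv_def by (rule D0[OF bZ])
lemma fbv_Dgt: "1 \<le> j \<Longrightarrow> j < i \<Longrightarrow> i \<le> Suc n \<Longrightarrow> d n i (fbv d b n j) = fbv d b (Suc n) j"
  unfolding fbv_def by (rule Dgt[OF bZ])
lemma fbv_Deq: "1 \<le> j \<Longrightarrow> j \<le> n \<Longrightarrow> d n j (fbv d b n j) = fbv d b (Suc n) j \<otimes>\<^bsub>G (Suc n)\<^esub> fbv d b (Suc n) (Suc j)"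
  unfolding fbv_def by (rule Deq[OF bZ])
lemma fbv_Dlt: "1 \<le> i \<Longrightarrow> i < j \<Longrightarrow> j \<le> n \<Longrightarrow> d n i (fbv d b n j) = fbv d b (Suc n) (Suc j)"
  unfolding fbv_def by (rule Dlt[OF bZ])
lemma fbv_Seq: "i \<le> n \<Longrightarrow> s n i (fbv d b (Suc n) (Suc i)) = \<one>\<^bsub>G n\<^esub>"
  unfolding fbv_def by (rule Seq[OF bZ])
lemma fbv_Sle: "1 \<le> j \<Longrightarrow> j \<le> i \<Longrightarrow> i \<le> n \<Longrightarrow> s n i (fbv d b (Suc n) j) = fbv d b n j"
  unfolding fbv_def by (rule Sle[OF bZ])
lemma fbv_Sgt: "Suc i < j \<Longrightarrow> j \<le> Suc n \<Longrightarrow> s n i (fbv d b (Suc n) j) = fbv d b n (j - 1)"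
  unfolding fbv_def by (rule Sgt[OF bZ])

lemma fbc: "x \<in> set w \<Longrightarrow> w \<in> carrier (Fgrp n) \<Longrightarrow> fbv d b n (fst x) \<in> carrier (G n)"
proof -
  assume "x \<in> set w" "w \<in> carrier (Fgrp n)"
  hence "1 \<le> fst x" "fst x \<le> n" by (auto simp: carrier_Fgrp)
  thus ?thesis by (rule fbv_closed)
qed

lemma hb_hom: "hbm G d b n \<in> hom (Fgrp n) (G n)"
proof (rule homI)
  fix w assume "w \<in> carrier (Fgrp n)"
  thus "hbm G d b n w \<in> carrier (G n)" unfolding hbm_def
    using group.ev_closed[OF grp, of w "fbv d b n"] fbc by simp
next
  fix u v assume u: "u \<in> carrier (Fgrp n)" and v: "v \<in> carrier (Fgrp n)"
  have uv: "red (u @ v) \<in> carrier (Fgrp n)" using u v by (intro red_carrier) (auto simp: carrier_Fgrp)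
  have c: "\<And>x. x \<in> set (u @ v) \<Longrightarrow> fbv d b n (fst x) \<in> carrier (G n)" using fbc u v by auto
  show "hbm G d b n (u \<otimes>\<^bsub>Fgrp n\<^esub> v) = hbm G d b n u \<otimes>\<^bsub>G n\<^esub> hbm G d b n v"
  proof -
    have "ev (G n) (fbv d b n) (red (u @ v)) = ev (G n) (fbv d b n) u \<otimes>\<^bsub>G n\<^esub> ev (G n) (fbv d b n) v"
      using group.ev_red[OF grp, of "u @ v" "fbv d b n", OF c] group.ev_append[OF grp, of u v "fbv d b n", OF c] by (rule trans)
    thus ?thesis unfolding hbm_def mult_Fgrp using u v uv by simp
  qed
qed

lemma evgen: "1 \<le> k \<Longrightarrow> k \<le> n \<Longrightarrow> ev (G n) (fbv d b n) (gen k) = fbv d b n k"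
  by (rule group.ev_gen[OF grp]) (rule fbv_closed)

lemma hb_Fd: assumes w: "w \<in> carrier (Fgrp n)" and i: "i \<le> Suc n"
  shows "hbm G d b (Suc n) (Fd n i w) = d n i (hbm G d b n w)"
proof -
  have cw: "\<And>x. x \<in> set w \<Longrightarrow> 1 \<le> fst x \<and> fst x \<le> n" using w by (auto simp: carrier_Fgrp)
  have c2: "\<And>x y. x \<in> set w \<Longrightarrow> y \<in> set (sd n i (fst x)) \<Longrightarrow> fbv d b (Suc n) (fst y) \<in> carrier (G (Suc n))"
  proof -
    fix x y assume "x \<in> set w" "y \<in> set (sd n i (fst x))"
    hence "1 \<le> fst y \<and> fst y \<le> Suc n" using cw[of x] i by (auto simp: sd_def gen_def split: if_splits)
    thus "fbv d b (Suc n) (fst y) \<in> carrier (G (Suc n))" using fbv_closed by blast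
  qed
  have "hbm G d b (Suc n) (Fd n i w) = ev (G (Suc n)) (fbv d b (Suc n)) (subst (sd n i) w)"
    unfolding hbm_def using Fd_carrier[OF w i] by (simp add: Fd_sd)
  also have "\<dots> = ev (G (Suc n)) (\<lambda>j. ev (G (Suc n)) (fbv d b (Suc n)) (sd n i j)) w"
    by (rule group.ev_subst[OF grp, where w=w and \<sigma>="sd n i" and f="fbv d b (Suc n)", OF c2])
  also have "\<dots> = ev (G (Suc n)) (\<lambda>j. d n i (fbv d b n j)) w"
  proof (rule ev_cong)
    fix x assume "x \<in> set w"
    hence j: "1 \<le> fst x" "fst x \<le> n" using cw by auto
    show "ev (G (Suc n)) (fbv d b (Suc n)) (sd n i (fst x)) = d n i (fbv d b n (fst x))"
    proof (cases "i = 0")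
      case True thus ?thesis using j by (simp add: sd_def evgen fbv_D0)
    next
      case False
      show ?thesis
      proof (cases "fst x < i")
        case True thus ?thesis using j i False by (auto simp: sd_def evgen fbv_Dgt)
      next
        case ge: False
        show ?thesis
        proof (cases "fst x = i")
          case True
          have "ev (G (Suc n)) (fbv d b (Suc n)) [(i, True), (Suc i, True)]
              = fbv d b (Suc n) i \<otimes>\<^bsub>G (Suc n)\<^esub> fbv d b (Suc n) (Suc i)"
            using fbv_closed[of i "Suc n"] fbv_closed[of "Suc i" "Suc n"] True j
            by (simp add: lv_def monoid.r_one[OF group.is_monoid[OF grp]])
          thus ?thesis using True j False by (simp add: sd_def fbv_Deq)
        next
          case False
          thus ?thesis using j ge \<open>i \<noteq> 0\<close> i by (auto simp: sd_def evgen fbv_Dlt)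
        qed
      qed
    qed
  qed
  also have "\<dots> = d n i (ev (G n) (fbv d b n) w)"
    using ev_hom[OF grp grp dhom[OF i], of w "fbv d b n"] fbc w by simp
  finally show ?thesis unfolding hbm_def using w by simp
qed

lemma hb_Fs: assumes w: "w \<in> carrier (Fgrp (Suc n))" and i: "i \<le> n"
  shows "hbm G d b n (Fs n i w) = s n i (hbm G d b (Suc n) w)"
proof -
  have cw: "\<And>x. x \<in> set w \<Longrightarrow> 1 \<le> fst x \<and> fst x \<le> Suc n" using w by (auto simp: carrier_Fgrp)
  have c2: "\<And>x y. x \<in> set w \<Longrightarrow> y \<in> set (ss n i (fst x)) \<Longrightarrow> fbv d b n (fst y) \<in> carrier (G n)"
  proof -
    fix x y assume "x \<in> set w" "y \<in> set (ss n i (fst x))"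
    hence "1 \<le> fst y \<and> fst y \<le> n" using cw[of x] i by (auto simp: ss_def gen_def split: if_splits)
    thus "fbv d b n (fst y) \<in> carrier (G n)" using fbv_closed by blast
  qed
  have "hbm G d b n (Fs n i w) = ev (G n) (fbv d b n) (subst (ss n i) w)"
    unfolding hbm_def using Fs_carrier[OF w i] by (simp add: Fs_ss)
  also have "\<dots> = ev (G n) (\<lambda>j. ev (G n) (fbv d b n) (ss n i j)) w"
    by (rule group.ev_subst[OF grp, where w=w and \<sigma>="ss n i" and f="fbv d b n", OF c2])
  also have "\<dots> = ev (G n) (\<lambda>j. s n i (fbv d b (Suc n) j)) w"
  proof (rule ev_cong)
    fix x assume "x \<in> set w"
    hence j: "1 \<le> fst x" "fst x \<le> Suc n" using cw by auto
    show "ev (G n) (fbv d b n) (ss n i (fst x)) = s n i (fbv d b (Suc n) (fst x))"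
    proof (cases "fst x \<le> i")
      case True thus ?thesis using j i by (simp add: ss_def evgen fbv_Sle)
    next
      case gt: False
      show ?thesis
      proof (cases "fst x = Suc i")
        case True thus ?thesis using j i by (simp add: ss_def fbv_Seq)
      next
        case False
        thus ?thesis using j i gt by (simp add: ss_def evgen fbv_Sgt)
      qed
    qed
  qed
  also have "\<dots> = s n i (ev (G (Suc n)) (fbv d b (Suc n)) w)"
    using ev_hom[OF grp grp shom[OF i], of w "fbv d b (Suc n)"] fbc w by simp
  finally show ?thesis unfolding hbm_def using w by simp
qed

lemma hb_morph: "hbm G d b \<in> cosimp_morphs G d s"
  unfolding cosimp_morphs_def using hb_hom hb_Fd hb_Fs by (auto simp: hbm_def)

lemma hb_gen1: "hbm G d b 1 (gen 1) = b"
  using gen_carrier[of 1 1] evgen[of 1 1] by (simp add: hbm_def fbv_def)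

end
end


context cosimp begin

lemma m_hom: "h \<in> cosimp_morphs G d s \<Longrightarrow> h n \<in> hom (Fgrp n) (G n)"
  by (simp add: cosimp_morphs_def)
lemma m_undef: "h \<in> cosimp_morphs G d s \<Longrightarrow> w \<notin> carrier (Fgrp n) \<Longrightarrow> h n w = undefined"
  by (simp add: cosimp_morphs_def)
lemma m_Fd: "h \<in> cosimp_morphs G d s \<Longrightarrow> i \<le> Suc n \<Longrightarrow> w \<in> carrier (Fgrp n) \<Longrightarrow>
    h (Suc n) (Fd n i w) = d n i (h n w)"
  by (simp add: cosimp_morphs_def)

lemma m_closed: "h \<in> cosimp_morphs G d s \<Longrightarrow> w \<in> carrier (Fgrp n) \<Longrightarrow> h n w \<in> carrier (G n)"
  using m_hom[of h n] by (auto simp: hom_def)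

lemma m_mult: "h \<in> cosimp_morphs G d s \<Longrightarrow> u \<in> carrier (Fgrp n) \<Longrightarrow> v \<in> carrier (Fgrp n) \<Longrightarrow>
    h n (red (u @ v)) = h n u \<otimes>\<^bsub>G n\<^esub> h n v"
  using hom_mult[OF m_hom[of h n], of u v] by (simp add: mult_Fgrp)

lemma m_one: assumes h: "h \<in> cosimp_morphs G d s" shows "h n [] = \<one>\<^bsub>G n\<^esub>"
proof -
  have e: "[] \<in> carrier (Fgrp n)" by (simp add: carrier_Fgrp)
  have "h n [] \<otimes>\<^bsub>G n\<^esub> h n [] = h n []" using m_mult[OF h e e] by simp
  thus ?thesis using group.r_cancel_one[OF grp, where x="h n []" and a="h n []"] m_closed[OF h e] by simp
qed

lemma m_eval: assumes h: "h \<in> cosimp_morphs G d s"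
  shows "w \<in> carrier (Fgrp n) \<Longrightarrow> h n w = ev (G n) (\<lambda>j. h n (gen j)) w"
proof (induct w)
  case Nil thus ?case using m_one[OF h] by simp
next
  case (Cons x w)
  obtain j c where x: "x = (j, c)" by (cases x)
  have r: "reduced (x # w)" and l: "\<forall>y\<in>set (x # w). 1 \<le> fst y \<and> fst y \<le> n"
    using Cons.prems by (auto simp: carrier_Fgrp)
  have wc: "w \<in> carrier (Fgrp n)" using r l reduced_tl[OF r] by (simp add: carrier_Fgrp)
  have xc: "[x] \<in> carrier (Fgrp n)" using l by (simp add: carrier_Fgrp)
  have j: "1 \<le> j" "j \<le> n" using l x by auto
  have gc: "gen j \<in> carrier (Fgrp n)" using j by (rule gen_carrier)
  have "h n (x # w) = h n (red ([x] @ w))" using red_reduced[OF r] by simp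
  also have "\<dots> = h n [x] \<otimes>\<^bsub>G n\<^esub> h n w" by (rule m_mult[OF h xc wc])
  also have "h n [x] = lv (G n) (\<lambda>j. h n (gen j)) x"
  proof (cases c)
    case True thus ?thesis using x by (simp add: lv_def gen_def)
  next
    case False
    have ic: "[(j, False)] \<in> carrier (Fgrp n)" using j by (simp add: carrier_Fgrp)
    have "red ([(j, False)] @ gen j) = []" by (simp add: gen_def red_Cons_cr cr_def)
    hence "h n [(j, False)] \<otimes>\<^bsub>G n\<^esub> h n (gen j) = \<one>\<^bsub>G n\<^esub>"
      using m_mult[OF h ic gc] m_one[OF h] by simp
    hence "inv\<^bsub>G n\<^esub> (h n (gen j)) = h n [(j, False)]"
      using group.inv_equality[OF grp] m_closed[OF h ic] m_closed[OF h gc] by blast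
    thus ?thesis using x False by (simp add: lv_def)
  qed
  finally show ?case using Cons.hyps[OF wc] by simp
qed

lemma m_A: assumes h: "h \<in> cosimp_morphs G d s"
  shows "h (Suc k) (gen 1) = dpow d 2 k 1 (h 1 (gen 1))"
proof (induct k)
  case 0 thus ?case by simp
next
  case (Suc k)
  have "Fd (Suc k) 2 (gen 1) = gen 1" by (simp add: Fd_gen sd_def)
  hence "h (Suc (Suc k)) (gen 1) = h (Suc (Suc k)) (Fd (Suc k) 2 (gen 1))" by simp
  also have "\<dots> = d (Suc k) 2 (h (Suc k) (gen 1))"
    using gen_carrier[of 1 "Suc k"] by (intro m_Fd[OF h]) auto
  finally show ?case using Suc by simp
qed

lemma m_B: assumes h: "h \<in> cosimp_morphs G d s" and j: "1 \<le> j" "j \<le> m"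
  shows "h (m + t) (gen (j + t)) = dpow d 0 t m (h m (gen j))"
proof (induct t)
  case 0 thus ?case by simp
next
  case (Suc t)
  have "Fd (m + t) 0 (gen (j + t)) = gen (j + Suc t)" by (simp add: Fd_gen sd_def)
  hence "h (m + Suc t) (gen (j + Suc t)) = h (Suc (m + t)) (Fd (m + t) 0 (gen (j + t)))" by simp
  also have "\<dots> = d (m + t) 0 (h (m + t) (gen (j + t)))"
    using gen_carrier[of "j + t" "m + t"] j by (intro m_Fd[OF h]) auto
  finally show ?case using Suc by simp
qed

lemma m_formula: assumes h: "h \<in> cosimp_morphs G d s" and j: "1 \<le> j" "j \<le> n"
  shows "h n (gen j) = dpow d 0 (j - 1) (Suc n - j) (dpow d 2 (n - j) 1 (h 1 (gen 1)))"
proof -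
  have "h (Suc (n - j) + (j - 1)) (gen (1 + (j - 1))) = dpow d 0 (j - 1) (Suc (n - j)) (h (Suc (n - j)) (gen 1))"
    by (rule m_B[OF h]) auto
  moreover have "Suc (n - j) + (j - 1) = n" "1 + (j - 1) = j" "Suc n - j = Suc (n - j)" using j by auto
  ultimately show ?thesis using m_A[OF h, of "n - j"] by simp
qed

lemma m_Z1: assumes h: "h \<in> cosimp_morphs G d s" shows "h 1 (gen 1) \<in> Z1 G d"
proof -
  let ?b = "h 1 (gen 1)"
  have g1: "gen 1 \<in> carrier (Fgrp 1)" by (simp add: gen_carrier)
  have g21: "gen 1 \<in> carrier (Fgrp 2)" "gen 2 \<in> carrier (Fgrp 2)" by (simp_all add: gen_carrier)
  have bc: "?b \<in> carrier (G 1)" using m_closed[OF h g1] .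
  have "Fd 1 2 (gen 1) = gen 1" by (simp add: Fd_gen sd_def)
  hence a: "d 1 2 ?b = h 2 (gen 1)" using m_Fd[OF h, of 2 1 "gen 1"] g1 by (simp add: numeral_2_eq_2)
  have "Fd 1 0 (gen 1) = gen 2" by (simp add: Fd_gen sd_def numeral_2_eq_2)
  hence b: "d 1 0 ?b = h 2 (gen 2)" using m_Fd[OF h, of 0 1 "gen 1"] g1 by (simp add: numeral_2_eq_2)
  have "Fd 1 1 (gen 1) = [(1, True), (2, True)]" by (simp add: Fd_gen sd_def red_pair numeral_2_eq_2)
  hence c: "d 1 1 ?b = h 2 [(1, True), (2, True)]" using m_Fd[OF h, of 1 1 "gen 1"] g1 by (simp add: numeral_2_eq_2)
  have "red (gen 1 @ gen 2) = [(1, True), (2, True)]" using red_pair[of 1] by (simp add: gen_def numeral_2_eq_2)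
  hence "h 2 (gen 1) \<otimes>\<^bsub>G 2\<^esub> h 2 (gen 2) = h 2 [(1, True), (2, True)]"
    using m_mult[OF h g21] by simp
  thus ?thesis using a b c bc by (simp add: Z1_def)
qed

end

theorem lemma3p2:
  fixes G :: "nat \<Rightarrow> ('a, 'b) monoid_scheme"
    and d :: "nat \<Rightarrow> nat \<Rightarrow> 'a \<Rightarrow> 'a"
    and s :: "nat \<Rightarrow> nat \<Rightarrow> 'a \<Rightarrow> 'a"
  assumes "cosimplicial_group G d s"
  shows "bij_betw (\<lambda>h. h 1 (gen 1)) (cosimp_morphs G d s) (Z1 G d) \<and>
         (\<forall>b \<in> Z1 G d. \<forall>h \<in> cosimp_morphs G d s. h 1 (gen 1) = b \<longrightarrow>
            (\<forall>n j. 1 \<le> j \<and> j \<le> n \<longrightarrow>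
               h n (gen j) = dpow d 0 (j - 1) (Suc n - j) (dpow d 2 (n - j) 1 b)))"
proof -
  interpret cosimp G d s by (rule cosimp.intro) (rule assms)
  have inj: "inj_on (\<lambda>h. h 1 (gen 1)) (cosimp_morphs G d s)"
  proof (rule inj_onI)
    fix h h' assume h: "h \<in> cosimp_morphs G d s" and h': "h' \<in> cosimp_morphs G d s"
      and eq: "h 1 (gen 1) = h' 1 (gen 1)"
    show "h = h'"
    proof (intro ext)
      fix n w
      show "h n w = h' n w"
      proof (cases "w \<in> carrier (Fgrp n)")
        case True
        have "ev (G n) (\<lambda>j. h n (gen j)) w = ev (G n) (\<lambda>j. h' n (gen j)) w"
        proof (rule ev_cong)
          fix x assume "x \<in> set w"
          hence j: "1 \<le> fst x" "fst x \<le> n" using True by (auto simp: carrier_Fgrp)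
          show "h n (gen (fst x)) = h' n (gen (fst x))"
            unfolding m_formula[OF h j] m_formula[OF h' j] eq by (rule refl)
        qed
        thus ?thesis using m_eval[OF h True] m_eval[OF h' True] by simp
      next
        case False thus ?thesis using m_undef[OF h] m_undef[OF h'] by simp
      qed
    qed
  qed
  have img: "(\<lambda>h. h 1 (gen 1)) ` cosimp_morphs G d s = Z1 G d"
  proof
    show "(\<lambda>h. h 1 (gen 1)) ` cosimp_morphs G d s \<subseteq> Z1 G d" using m_Z1 by blast
  next
    show "Z1 G d \<subseteq> (\<lambda>h. h 1 (gen 1)) ` cosimp_morphs G d s"
    proof
      fix b assume b: "b \<in> Z1 G d"
      show "b \<in> (\<lambda>h. h 1 (gen 1)) ` cosimp_morphs G d s"
        using hb_morph[OF b] hb_gen1[OF b] by (intro image_eqI[where x="hbm G d b"]) simp_all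
    qed
  qed
  have frm: "\<forall>b \<in> Z1 G d. \<forall>h \<in> cosimp_morphs G d s. h 1 (gen 1) = b \<longrightarrow>
            (\<forall>n j. 1 \<le> j \<and> j \<le> n \<longrightarrow>
               h n (gen j) = dpow d 0 (j - 1) (Suc n - j) (dpow d 2 (n - j) 1 b))"
  proof (intro ballI impI allI)
    fix b h and n j :: nat assume "h \<in> cosimp_morphs G d s" "h 1 (gen 1) = b" "1 \<le> j \<and> j \<le> n"
    thus "h n (gen j) = dpow d 0 (j - 1) (Suc n - j) (dpow d 2 (n - j) 1 b)"
      using m_formula[of h j n] by simp
  qed
  show ?thesis using inj img frm unfolding bij_betw_def by blast
qed


end
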